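(* Let $\boldsymbol{h}_1,\dots,\boldsymbol{h}_K\in\mathbb{C}^{N_t\times1}$, $\Gamma\ge0$, $P>0$, and let $\lambda\ge0$, $\mu_1,\dots,\mu_K\ge0$ be such that $\boldsymbol{A}(\lambda,\{\mu_k\}):=\lambda\boldsymbol{I}-\sum_{k=1}^K\mu_k\boldsymbol{h}_k\boldsymbol{h}_k^H\succeq\boldsymbol{0}$. Let $N=\mathrm{rank}(\boldsymbol{A}(\lambda,\{\mu_k\}))\le N_t$ and let $\boldsymbol{A}(\lambda,\{\mu_k\})=\boldsymbol{U}\boldsymbol{\Lambda}\boldsymbol{U}^H$ be an eigenvalue decomposition with $\boldsymbol{U}$ unitary and $\boldsymbol{\Lambda}=\mathrm{diag}(\alpha_1,\dots,\alpha_{N_t})$, $\alpha_1\ge\dots\ge\alpha_{N_t}$ (so $\alpha_i>0$ for $i\le N$ and $\alpha_i=0$ for $i>N$). Consider the problem of minimizing over $\boldsymbol{S}_x\succeq\boldsymbol{0}$ the function $$\mathcal{L}(\boldsymbol{S}_x,\lambda,\{\mu_k\}) = \mathrm{tr}(\boldsymbol{S}_x^{-1}) + \Gamma\sum_{k=1}^K\mu_k + \mathrm{tr}\big(\boldsymbol{A}(\lambda,\{\mu_k\})\boldsymbol{S}_x\big) - \lambda P,$$ with $\mathrm{tr}(\boldsymbol{S}_x^{-1})=+\infty$ for singular $\boldsymbol{S}_x$. Then the optimal solution is $\boldsymbol{S}_x^{*}=\boldsymbol{U}\boldsymbol{\Sigma}\boldsymbol{U}^H$ with $\boldsymbol{\Sigma}=\mathrm{diag}(\tau_1,\dots,\tau_{N_t})$,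 where $\tau_i=\alpha_i^{-1/2}$ for $i\le N$ and $\tau_i\to+\infty$ for $N<i\le N_t$. Precisely: if $N=N_t$, then $\boldsymbol{U}\,\mathrm{diag}(\alpha_1^{-1/2},\dots,\alpha_{N_t}^{-1/2})\,\boldsymbol{U}^H$ minimizes $\mathcal{L}(\cdot,\lambda,\{\mu_k\})$ over $\boldsymbol{S}_x\succeq\boldsymbol{0}$; and in general, $\inf_{\boldsymbol{S}_x\succeq\boldsymbol{0}}\mathcal{L}(\boldsymbol{S}_x,\lambda,\{\mu_k\}) = \lim_{t\to+\infty}\mathcal{L}\big(\boldsymbol{U}\,\mathrm{diag}(\alpha_1^{-1/2},\dots,\alpha_N^{-1/2},t,\dots,t)\,\boldsymbol{U}^H,\lambda,\{\mu_k\}\big)$.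
   Context: $\boldsymbol{S}\succeq\boldsymbol{0}$ denotes Hermitian positive semidefinite; $(\cdot)^H$ is conjugate transpose; $\boldsymbol{I}$ is the $N_t\times N_t$ identity. *)

theory Defs
  imports "HOL-Analysis.Analysis"
begin

definition adj :: "complex^'n^'n \<Rightarrow> complex^'n^'n" where
  "adj M = (\<chi> i j. cnj (M $ j $ i))"

definition psd :: "complex^'n^'n \<Rightarrow> bool" where
  "psd S \<longleftrightarrow> adj S = S \<and> (\<forall>x::complex^'n. 0 \<le> Re (\<Sum>i\<in>UNIV. cnj (x $ i) * (S *v x) $ i))"

definition unitary :: "complex^'n^'n \<Rightarrow> bool" where
  "unitary U \<longleftrightarrow> adj U ** U = mat 1"

definition diagm :: "('n \<Rightarrow> real) \<Rightarrow> complex^'n^'n" where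
  "diagm d = (\<chi> i j. if i = j then complex_of_real (d i) else 0)"

definition outer :: "complex^'n \<Rightarrow> complex^'n^'n" where
  "outer h = (\<chi> i j. h $ i * cnj (h $ j))"

definition Amat :: "(nat \<Rightarrow> complex^'n) \<Rightarrow> nat \<Rightarrow> real \<Rightarrow> (nat \<Rightarrow> real) \<Rightarrow> complex^'n^'n" where
  "Amat h K lam mu = lam *\<^sub>R mat 1 - (\<Sum>k<K. mu k *\<^sub>R outer (h k))"

text \<open>The Lagrangian; tr(S^{-1}) = +infinity for singular S. Traces are real here
  (products of Hermitian PSD matrices), so we take real parts.\<close>
definition Lag :: "(nat \<Rightarrow> complex^'n) \<Rightarrow> nat \<Rightarrow> real \<Rightarrow> real \<Rightarrow> real \<Rightarrow> (nat \<Rightarrow> real)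
    \<Rightarrow> complex^'n^'n \<Rightarrow> ereal" where
  "Lag h K Gam P lam mu S =
     (if invertible S then
        ereal (Re (trace (matrix_inv S)) + Gam * (\<Sum>k<K. mu k)
               + Re (trace (Amat h K lam mu ** S)) - lam * P)
      else \<infinity>)"

text \<open>0-based position of an index in the well-order of the index type.\<close>
definition pos :: "'n::{finite,wellorder} \<Rightarrow> nat" where
  "pos i = card {j. j < i}"

end

theory Submission imports Defs begin

lemma adj_mult: "adj (X ** Y) = adj Y ** adj (X::complex^'n^'n)"
  by (simp add: adj_def matrix_matrix_mult_def vec_eq_iff mult.commute)

lemma adj_adj[simp]: "adj (adj X) = X"
  by (simp add: adj_def vec_eq_iff)

lemma adj_diagm[simp]: "adj (diagm d) = diagm d"
  by (simp add: adj_def diagm_def vec_eq_iff)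

lemma adj_mat1[simp]: "adj (mat 1 :: complex^'n^'n) = mat 1"
  by (simp add: adj_def mat_def vec_eq_iff)

lemma adj_diff: "adj (X - Y) = adj X - adj (Y::complex^'n^'n)"
  by (simp add: adj_def vec_eq_iff)


lemma sd1: fixes i :: "'n::finite" shows "(\<Sum>k\<in>UNIV. (if i = k then (a k::complex) else 0) * f k) = a i * f i"
proof -
  have "(\<Sum>k\<in>UNIV. (if i = k then (a k::complex) else 0) * f k) = (\<Sum>k\<in>UNIV. if i = k then a k * f k else 0)"
    by (rule sum.cong) auto
  then show ?thesis by simp
qed
lemma sd2: fixes j :: "'n::finite" shows "(\<Sum>k\<in>UNIV. f k * (if k = j then (a k::complex) else 0)) = f j * a j"
proof -
  have "(\<Sum>k\<in>UNIV. f k * (if k = j then (a k::complex) else 0)) = (\<Sum>k\<in>UNIV. if k = j then f k * a k else 0)"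
    by (rule sum.cong) auto
  then show ?thesis by simp
qed
lemma diagm_mult: "diagm d ** diagm e = (diagm (\<lambda>i. d i * e i) :: complex^'n^'n)"
  by (simp add: diagm_def matrix_matrix_mult_def vec_eq_iff sd2)
lemma diagm_mv: "diagm d *v y = (\<chi> i. complex_of_real (d i) * y $ i)"
  by (simp add: diagm_def matrix_vector_mult_def vec_eq_iff sd1)

lemma trace_diagm: "trace (diagm d :: complex^'n^'n) = complex_of_real (\<Sum>i\<in>UNIV. d i)"
  by (simp add: diagm_def trace_def)

lemma mat_sub_ldistrib: "(A::complex^'n^'n) ** (B - C) = A ** B - A ** C"
  by (simp add: matrix_matrix_mult_def vec_eq_iff right_diff_distrib sum_subtractf)

lemma mat_sub_rdistrib: "((A::complex^'n^'n) - B) ** C = A ** C - B ** C"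
  by (simp add: matrix_matrix_mult_def vec_eq_iff left_diff_distrib sum_subtractf)

lemma conj_mult:
  assumes "adj U ** U = mat 1"
  shows "(U ** X ** adj U) ** (U ** Y ** adj U) = U ** (X ** Y) ** adj (U::complex^'n^'n)"
proof -
  have "(U ** X ** adj U) ** (U ** Y ** adj U) = U ** X ** (adj U ** U) ** Y ** adj U"
    by (simp add: matrix_mul_assoc)
  then show ?thesis using assms by (simp add: matrix_mul_assoc)
qed

lemma trace_conj:
  assumes "adj U ** U = mat 1"
  shows "trace (U ** X ** adj U) = trace (X::complex^'n^'n)"
proof -
  have "trace ((U ** X) ** adj U) = trace (adj U ** (U ** X))" by (rule trace_mul_sym)
  also have "\<dots> = trace X" using assms by (simp add: matrix_mul_assoc)
  finally show ?thesis .
qed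

definition qf :: "complex^'n^'n \<Rightarrow> complex^'n \<Rightarrow> complex" where
  "qf S x = (\<Sum>i\<in>UNIV. cnj (x $ i) * (S *v x) $ i)"

lemma psd_qf: "psd S \<longleftrightarrow> adj S = S \<and> (\<forall>x. 0 \<le> Re (qf S x))"
  by (simp add: psd_def qf_def)

lemma sum_adj_move:
  "(\<Sum>i\<in>UNIV. cnj (x $ i) * (M *v z) $ i) = (\<Sum>j\<in>UNIV. cnj ((adj M *v x) $ j) * z $ j)"
proof -
  have "(\<Sum>i\<in>UNIV. cnj (x $ i) * (M *v z) $ i) = (\<Sum>i\<in>UNIV. \<Sum>j\<in>UNIV. cnj (x $ i) * M $ i $ j * z $ j)"
    by (simp add: matrix_vector_mult_def sum_distrib_left mult.assoc)
  also have "\<dots> = (\<Sum>j\<in>UNIV. \<Sum>i\<in>UNIV. cnj (x $ i) * M $ i $ j * z $ j)"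
    by (rule sum.swap)
  also have "\<dots> = (\<Sum>j\<in>UNIV. cnj ((adj M *v x) $ j) * z $ j)"
    by (simp add: matrix_vector_mult_def adj_def sum_distrib_left sum_distrib_right mult_ac)
  finally show ?thesis .
qed

lemma qf_conj:
  assumes "adj U ** U = mat 1"
  shows "qf (U ** D ** adj U) (U *v y) = qf D (y::complex^'n)"
proof -
  have "(U ** D ** adj U) *v (U *v y) = U *v (D *v y)"
    by (simp add: matrix_vector_mul_assoc assms flip: matrix_mul_assoc)
  then have "qf (U ** D ** adj U) (U *v y) = (\<Sum>i\<in>UNIV. cnj ((U *v y) $ i) * (U *v (D *v y)) $ i)"
    by (simp add: qf_def)
  also have "\<dots> = (\<Sum>j\<in>UNIV. cnj ((adj U *v (U *v y)) $ j) * (D *v y) $ j)"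
    by (rule sum_adj_move)
  also have "\<dots> = qf D y" using assms by (simp add: qf_def matrix_vector_mul_assoc)
  finally show ?thesis .
qed

lemma qf_diag: "qf (diagm d) y = (\<Sum>i\<in>UNIV. cnj (y $ i) * (complex_of_real (d i) * y $ i))"
  by (simp add: qf_def diagm_mv)

lemma Re_qf_diag_nonneg:
  assumes "\<forall>i. d i \<ge> 0" shows "0 \<le> Re (qf (diagm d) y)"
proof -
  have "Re (cnj (y $ i) * (complex_of_real (d i) * y $ i)) = d i * (cmod (y $ i))^2" for i
    by (simp add: cmod_def power2_eq_square algebra_simps)
  then show ?thesis using assms by (simp add: qf_diag sum_nonneg)
qed

lemma psd_conj_diag:
  assumes "adj U ** U = mat 1" "\<forall>i. d i \<ge> 0"
  shows "psd (U ** diagm d ** adj (U::complex^'n^'n))"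
proof -
  have UU: "U ** adj U = mat 1" using assms(1) matrix_left_right_inverse by blast
  have "adj (U ** diagm d ** adj U) = U ** diagm d ** adj U"
    by (simp add: adj_mult matrix_mul_assoc)
  moreover have "0 \<le> Re (qf (U ** diagm d ** adj U) x)" for x
  proof -
    have "x = U *v (adj U *v x)" using UU by (simp add: matrix_vector_mul_assoc)
    then have "qf (U ** diagm d ** adj U) x = qf (diagm d) (adj U *v x)"
      using qf_conj[OF assms(1)] by metis
    then show ?thesis using Re_qf_diag_nonneg assms(2) by simp
  qed
  ultimately show ?thesis by (simp add: psd_qf)
qed


lemma diagm_one: "diagm (\<lambda>_. 1) = (mat 1 :: complex^'n^'n)"
  by (simp add: diagm_def mat_def vec_eq_iff)

lemma inv_props:
  assumes "invertible (S::complex^'n^'n)"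
  shows "S ** matrix_inv S = mat 1 \<and> matrix_inv S ** S = mat 1"
  using assms unfolding invertible_def matrix_inv_def by (rule someI_ex)

lemma matrix_inv_eq:
  fixes A B :: "complex^'n^'n"
  assumes AB: "A ** B = mat 1"
  shows "invertible A" "matrix_inv A = B"
proof -
  have BA: "B ** A = mat 1" using AB matrix_left_right_inverse by blast
  show inv: "invertible A" unfolding invertible_def using AB BA by blast
  have C: "A ** matrix_inv A = mat 1 \<and> matrix_inv A ** A = mat 1" using inv_props[OF inv] .
  have "matrix_inv A = matrix_inv A ** (A ** B)" using AB by simp
  also have "\<dots> = (matrix_inv A ** A) ** B" by (simp add: matrix_mul_assoc)
  also have "\<dots> = B" using C by simp
  finally show "matrix_inv A = B" .
qed

lemma inv_conj:
  assumes U: "adj U ** U = mat 1" and d: "\<forall>i. d i \<noteq> 0"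
  shows "invertible (U ** diagm d ** adj (U::complex^'n^'n))"
    "matrix_inv (U ** diagm d ** adj U) = U ** diagm (\<lambda>i. 1 / d i) ** adj U"
proof -
  have UU: "U ** adj U = mat 1" using U matrix_left_right_inverse by blast
  have e: "(\<lambda>i. d i * (1 / d i)) = (\<lambda>_. 1)" using d by (auto simp: fun_eq_iff)
  have "(U ** diagm d ** adj U) ** (U ** diagm (\<lambda>i. 1 / d i) ** adj U) = mat 1"
    unfolding conj_mult[OF U] diagm_mult e diagm_one by (simp add: UU)
  then show "invertible (U ** diagm d ** adj U)"
    "matrix_inv (U ** diagm d ** adj U) = U ** diagm (\<lambda>i. 1 / d i) ** adj U"
    using matrix_inv_eq by blast+
qed

lemma alpha_nonneg:
  assumes U: "adj U ** U = mat 1" and P: "psd (U ** diagm a ** adj (U::complex^'n^'n))"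
  shows "a i \<ge> 0"
proof -
  have "0 \<le> Re (qf (U ** diagm a ** adj U) (U *v axis i 1))" using P by (simp add: psd_qf)
  also have "qf (U ** diagm a ** adj U) (U *v axis i 1) = qf (diagm a) (axis i 1)"
    by (rule qf_conj[OF U])
  also have "\<dots> = (\<Sum>k\<in>UNIV. if k = i then complex_of_real (a k) else 0)"
    unfolding qf_diag by (rule sum.cong) (auto simp: axis_def)
  also have "\<dots> = complex_of_real (a i)" by simp
  finally show ?thesis by simp
qed

lemma trace_qf: "trace (adj N ** (S ** N)) = (\<Sum>j\<in>UNIV. qf S (column j (N::complex^'n^'n)))"
  by (simp add: trace_def qf_def matrix_matrix_mult_def matrix_vector_mult_def adj_def column_def)

lemma trace_psd_nonneg:
  assumes "psd S" shows "0 \<le> Re (trace (adj N ** S ** (N::complex^'n^'n)))"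
proof -
  have "trace (adj N ** S ** N) = (\<Sum>j\<in>UNIV. qf S (column j N))"
    by (simp add: trace_qf flip: matrix_mul_assoc)
  then show ?thesis using assms by (simp add: psd_qf sum_nonneg)
qed

lemma key_ineq:
  assumes U: "adj U ** U = mat 1" and a: "\<forall>i. a i \<ge> 0" and S: "psd S" "invertible S"
  shows "2 * (\<Sum>i\<in>UNIV. sqrt (a i)) \<le> Re (trace (matrix_inv S)) + Re (trace ((U ** diagm a ** adj U) ** (S::complex^'n^'n)))"
proof -
  define B where "B = U ** diagm (\<lambda>i. sqrt (a i)) ** adj U"
  define Si where "Si = matrix_inv S"
  have e: "(\<lambda>i. sqrt (a i) * sqrt (a i)) = a" using a by (auto simp: fun_eq_iff)
  have BB: "B ** B = U ** diagm a ** adj U"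
    unfolding B_def conj_mult[OF U] diagm_mult e ..
  have adjB: "adj B = B" by (simp add: B_def adj_mult matrix_mul_assoc)
  have trB: "trace B = complex_of_real (\<Sum>i\<in>UNIV. sqrt (a i))"
    by (simp add: B_def trace_conj[OF U] trace_diagm)
  have SSi: "S ** Si = mat 1" "Si ** S = mat 1" using inv_props[OF S(2)] by (auto simp: Si_def)
  have adjS: "adj S = S" using S(1) by (simp add: psd_def)
  have "adj Si ** S = mat 1"
    by (metis adjS adj_mult SSi(1) adj_mat1)
  then have adjSi: "adj Si = Si"
    by (metis SSi(1) matrix_mul_assoc matrix_mul_lid matrix_mul_rid)
  define M where "M = Si - B"
  have adjM: "adj M = Si - B" by (simp add: M_def adj_diff adjSi adjB)
  have e1: "(Si - B) ** S = mat 1 - B ** S" by (simp add: mat_sub_rdistrib SSi)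
  have e2: "(mat 1 - B ** S) ** (Si - B) = (Si - B) - (B ** S ** Si - B ** S ** B)"
    by (simp add: mat_sub_rdistrib mat_sub_ldistrib)
  have e3: "B ** S ** Si = B" by (simp add: SSi flip: matrix_mul_assoc)
  have MM: "adj M ** S ** M = Si - B - (B - B ** S ** B)"
    unfolding adjM unfolding M_def e1 e2 e3 ..
  have t1: "trace (B ** S ** B) = trace ((B ** B) ** S)"
    by (metis trace_mul_sym matrix_mul_assoc)
  have "0 \<le> Re (trace (adj M ** S ** M))" by (rule trace_psd_nonneg[OF S(1)])
  also have "trace (adj M ** S ** M) = trace Si - trace B - (trace B - trace ((B ** B) ** S))"
    unfolding MM trace_sub t1 ..
  finally show ?thesis by (simp add: trB BB Si_def)
qed


lemma row_mult: "row i ((X::complex^'n^'n) ** Y) = (\<Sum>k\<in>UNIV. X $ i $ k *s row k Y)"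
  by (simp add: row_def matrix_matrix_mult_def vec_eq_iff sum_component)

lemma rank_mult_le: "rank ((X::complex^'n^'n) ** Y) \<le> rank Y"
  unfolding row_rank_def_gen
proof (rule vec.dim_mono)
  show "rows (X ** Y) \<subseteq> vec.span (rows Y)"
  proof
    fix v assume "v \<in> rows (X ** Y)"
    then obtain i where v: "v = row i (X ** Y)" by (auto simp: rows_def)
    have "row k Y \<in> vec.span (rows Y)" for k
      by (rule vec.span_base) (auto simp: rows_def)
    then show "v \<in> vec.span (rows Y)"
      unfolding v row_mult by (intro vec.span_sum vec.span_scale) auto
  qed
qed

lemma rank_left:
  assumes "adj U ** U = mat 1"
  shows "rank (U ** (X::complex^'n^'n)) = rank X"
proof (rule antisym)
  show "rank (U ** X) \<le> rank X" by (rule rank_mult_le)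
  have "rank X = rank (adj U ** (U ** X))" using assms by (simp add: matrix_mul_assoc)
  also have "\<dots> \<le> rank (U ** X)" by (rule rank_mult_le)
  finally show "rank X \<le> rank (U ** X)" .
qed

lemma row_mult_right: "row i ((X::complex^'n^'n) ** W) = row i X v* W"
  by (simp add: row_def vector_matrix_mult_def matrix_matrix_mult_def vec_eq_iff)

lemma rank_right:
  assumes WV: "W ** V = mat 1"
  shows "rank ((X::complex^'n^'n) ** W) = rank X"
proof -
  have "rows (X ** W) = (\<lambda>v. transpose W *v v) ` rows X"
    by (auto simp: rows_def row_mult_right)
  moreover have "vec.dim ((\<lambda>v. transpose W *v v) ` rows X) = vec.dim (rows X)"
  proof (rule vec.dim_image_eq)
    show "Vector_Spaces.linear (*s) (*s) ((*v) (transpose W))"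
      by (rule matrix_vector_mul_linear_gen)
    show "inj_on ((*v) (transpose W)) (vec.span (rows X))"
    proof (rule inj_onI)
      fix x y assume "transpose W *v x = transpose W *v y"
      then have "(x v* W) v* V = (y v* W) v* V" by simp
      then show "x = y" by (simp add: vector_matrix_mul_assoc WV)
    qed
  qed
  ultimately show ?thesis unfolding row_rank_def_gen by simp
qed

lemma row_diagm: "row i (diagm d :: complex^'n^'n) = complex_of_real (d i) *s axis i 1"
  by (simp add: row_def diagm_def axis_def vec_eq_iff)

lemma rank_diagm: "rank (diagm d :: complex^'n^'n) = card {i. d i \<noteq> 0}"
proof -
  define E :: "(complex^'n) set" where "E = (\<lambda>i. axis i 1) ` {i. d i \<noteq> 0}"
  have "vec.dim (rows (diagm d :: complex^'n^'n)) = vec.dim E"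
  proof (rule antisym)
    show "vec.dim (rows (diagm d :: complex^'n^'n)) \<le> vec.dim E"
    proof (rule vec.dim_mono, rule subsetI)
      fix v assume "v \<in> rows (diagm d :: complex^'n^'n)"
      then obtain i where v: "v = complex_of_real (d i) *s axis i 1"
        by (auto simp: rows_def row_diagm)
      show "v \<in> vec.span E"
      proof (cases "d i = 0")
        case True then show ?thesis by (simp add: v vec.span_zero)
      next
        case False
        then have "axis i 1 \<in> E" by (auto simp: E_def)
        then show ?thesis unfolding v by (intro vec.span_scale vec.span_base)
      qed
    qed
    show "vec.dim E \<le> vec.dim (rows (diagm d :: complex^'n^'n))"
    proof (rule vec.dim_mono, rule subsetI)
      fix v assume "v \<in> E"
      then obtain i where i: "d i \<noteq> 0" and v: "v = axis i 1" by (auto simp: E_def)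
      have "row i (diagm d :: complex^'n^'n) \<in> rows (diagm d)" by (auto simp: rows_def)
      then have "(1 / complex_of_real (d i)) *s row i (diagm d :: complex^'n^'n) \<in> vec.span (rows (diagm d))"
        by (intro vec.span_scale vec.span_base)
      moreover have "(1 / complex_of_real (d i)) *s row i (diagm d :: complex^'n^'n) = v"
        using i by (simp add: row_diagm v)
      ultimately show "v \<in> vec.span (rows (diagm d :: complex^'n^'n))" by simp
    qed
  qed
  also have "vec.dim E = card E"
  proof (rule vec.dim_eq_card_independent)
    show "vec.independent E"
      by (rule vec.independent_mono[OF independent_cart_basis]) (auto simp: E_def cart_basis_def)
  qed
  also have "card E = card {i. d i \<noteq> 0}"
    unfolding E_def by (rule card_image) (auto simp: inj_on_def axis_eq_axis)
  finally show ?thesis by (simp add: row_rank_def_gen)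
qed

lemma pos_char:
  fixes a :: "'n::{finite,wellorder} \<Rightarrow> real"
  assumes a0: "\<forall>i. a i \<ge> 0" and mono: "\<forall>i j. i \<le> j \<longrightarrow> a j \<le> a i"
  shows "a i > 0 \<longleftrightarrow> pos i < card {i. a i \<noteq> 0}"
proof
  assume ai: "a i > 0"
  have "{j. j < i} \<subset> {i. a i \<noteq> 0}"
  proof
    show "{j. j < i} \<subseteq> {i. a i \<noteq> 0}"
    proof
      fix j assume "j \<in> {j. j < i}"
      then have "j \<le> i" by simp
      then have "a i \<le> a j" using mono by blast
      then show "j \<in> {i. a i \<noteq> 0}" using ai by simp
    qed
    have "i \<in> {i. a i \<noteq> 0}" using ai by simp
    moreover have "i \<notin> {j. j < i}" by simp
    ultimately show "{j. j < i} \<noteq> {i. a i \<noteq> 0}" by blast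
  qed
  then show "pos i < card {i. a i \<noteq> 0}" unfolding pos_def by (rule psubset_card_mono[rotated]) simp
next
  assume p: "pos i < card {i. a i \<noteq> 0}"
  show "a i > 0"
  proof (rule ccontr)
    assume "\<not> a i > 0"
    then have ai: "a i = 0" using a0 by (simp add: not_less order.antisym)
    have "{i. a i \<noteq> 0} \<subseteq> {j. j < i}"
    proof
      fix j assume "j \<in> {i. a i \<noteq> 0}"
      then have "a j \<noteq> 0" by simp
      show "j \<in> {j. j < i}"
      proof (rule ccontr)
        assume "j \<notin> {j. j < i}"
        then have "i \<le> j" by (simp add: not_less)
        then have "a j \<le> a i" using mono by blast
        then have "a j \<le> 0" using ai by simp
        moreover have "a j \<ge> 0" using a0 by blast
        ultimately show False using \<open>a j \<noteq> 0\<close> by simp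
      qed
    qed
    then have "card {i. a i \<noteq> 0} \<le> pos i" unfolding pos_def by (rule card_mono[rotated]) simp
    with p show False by simp
  qed
qed

lemma pos_lt_card: "pos (i::'n::{finite,wellorder}) < card (UNIV :: 'n set)"
  unfolding pos_def by (rule psubset_card_mono) auto

lemma powr_half_inv': "(a::real) > 0 \<Longrightarrow> a powr (- (1/2)) = 1 / sqrt a"
  by (simp add: powr_minus_divide powr_half_sqrt)

lemma powr_half_inv: "(a::real) > 0 \<Longrightarrow> a powr (-1/2) = 1 / sqrt a"
  by (simp add: powr_minus_divide powr_half_sqrt)



theorem lemma3:
  fixes alpha :: "'n::{finite,wellorder} \<Rightarrow> real"
    and h :: "nat \<Rightarrow> (complex, 'n) vec"
    and K :: nat and Gam P lam :: real and mu :: "nat \<Rightarrow> real"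
    and N :: nat and U :: "((complex, 'n) vec, 'n) vec"
  assumes "Gam \<ge> 0" and "P > 0" and "lam \<ge> 0" and "\<forall>k<K. mu k \<ge> 0"
    and "psd (Amat h K lam mu)"
    and "N = rank (Amat h K lam mu)"
    and "unitary U"
    and "Amat h K lam mu = U ** diagm alpha ** adj U"
    and "\<forall>i j. i \<le> j \<longrightarrow> alpha j \<le> alpha i"
  shows "(N = card (UNIV :: 'n set) \<longrightarrow>
            (let S0 = U ** diagm (\<lambda>i. alpha i powr (-1/2)) ** adj U in
              psd S0 \<and> (\<forall>S. psd S \<longrightarrow> Lag h K Gam P lam mu S0 \<le> Lag h K Gam P lam mu S)))
       \<and> ((\<lambda>t. Lag h K Gam P lam mu
               (U ** diagm (\<lambda>i. if pos i < N then alpha i powr (-1/2) else t) ** adj U))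
            \<longlongrightarrow> (INF S\<in>{S. psd S}. Lag h K Gam P lam mu S)) at_top"
  proof -
  let ?A = "Amat h K lam mu"
  have U: "adj U ** U = mat 1" using assms(7) by (simp add: unitary_def)
  have psdD: "psd (U ** diagm alpha ** adj U)" using assms(5) assms(8) by simp
  have a0: "\<forall>i. alpha i \<ge> 0" using alpha_nonneg[OF U psdD] by blast
  have Nc: "N = card {i. alpha i \<noteq> 0}"
  proof -
    have "rank ?A = rank ((U ** diagm alpha) ** adj U)" using assms(8) by simp
    also have "\<dots> = rank (U ** diagm alpha)" by (rule rank_right[OF U])
    also have "\<dots> = rank (diagm alpha)" by (rule rank_left[OF U])
    also have "\<dots> = card {i. alpha i \<noteq> 0}" by (rule rank_diagm)
    finally show ?thesis using assms(6) by simp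
  qed
  have apos: "alpha i > 0 \<longleftrightarrow> pos i < N" for i using pos_char[OF a0 assms(9)] Nc by simp
  have azero: "alpha i = 0" if "\<not> pos i < N" for i
  proof -
    have "\<not> alpha i > 0" using apos[of i] that by simp
    moreover have "alpha i \<ge> 0" using a0 by blast
    ultimately show ?thesis by simp
  qed
  define C where "C = Gam * (\<Sum>k<K. mu k) - lam * P"
  define T where "T = (\<Sum>i\<in>UNIV. sqrt (alpha i))"
  define L where "L = 2 * T + C"
  define tau where "tau t i = (if pos i < N then alpha i powr (-1/2) else t)" for t i
  have tauEq: "tau t = (\<lambda>i. if pos i < N then alpha i powr (-1/2) else t)" for t
    by (simp add: fun_eq_iff tau_def)
  define St where "St t = U ** diagm (tau t) ** adj U" for t
  define c where "c = real (card {i::'n. \<not> pos i < N})"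
  have LagSt: "Lag h K Gam P lam mu (St t) = ereal (L + c / t)" if t: "t > 0" for t
  proof -
    have tpos: "\<forall>i. tau t i \<noteq> 0"
    proof
      fix i show "tau t i \<noteq> 0"
      proof (cases "pos i < N")
        case True
        then have "alpha i > 0" using apos by blast
        then show ?thesis using True by (simp add: tau_def powr_half_inv)
      next
        case False then show ?thesis using t by (simp add: tau_def)
      qed
    qed
    have inv: "invertible (St t)" "matrix_inv (St t) = U ** diagm (\<lambda>i. 1 / tau t i) ** adj U"
      using inv_conj[OF U tpos] by (simp_all add: St_def)
    have e1: "1 / tau t i = sqrt (alpha i) + (if \<not> pos i < N then 1 / t else 0)" for i
    proof (cases "pos i < N")
      case True
      then have "alpha i > 0" using apos by blast
      then show ?thesis using True by (simp add: tau_def powr_half_inv powr_half_inv')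
    next
      case False then show ?thesis using azero[OF False] by (simp add: tau_def)
    qed
    have e2: "alpha i * tau t i = sqrt (alpha i)" for i
    proof (cases "pos i < N")
      case True
      then have "alpha i > 0" using apos by blast
      then have "alpha i * (1 / sqrt (alpha i)) = sqrt (alpha i)"
        using real_div_sqrt[of "alpha i"] by simp
      then show ?thesis using True \<open>alpha i > 0\<close> by (simp add: tau_def powr_half_inv')
    next
      case False then show ?thesis using azero[OF False] by (simp add: tau_def)
    qed
    have s1: "(\<Sum>i::'n\<in>UNIV. (if \<not> pos i < N then 1 / t else 0)) = c / t"
      by (simp add: sum.If_cases c_def)
    have tr1: "Re (trace (matrix_inv (St t))) = T + c / t"
      unfolding inv(2) trace_conj[OF U] trace_diagm e1
      by (simp add: sum.distrib s1 T_def)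
    have "?A ** St t = U ** diagm (\<lambda>i. alpha i * tau t i) ** adj U"
      unfolding assms(8) St_def conj_mult[OF U] diagm_mult ..
    then have tr2: "Re (trace (?A ** St t)) = T"
      by (simp add: trace_conj[OF U] trace_diagm e2 T_def)
    show ?thesis unfolding Lag_def using inv(1) tr1 tr2 by (simp add: L_def C_def algebra_simps)
  qed
  have psdSt: "psd (St t)" if "t > 0" for t
    unfolding St_def by (rule psd_conj_diag[OF U]) (use that in \<open>simp add: tau_def\<close>)
  have lower: "ereal L \<le> Lag h K Gam P lam mu S" if "psd S" for S
  proof (cases "invertible S")
    case True
    have "2 * T \<le> Re (trace (matrix_inv S)) + Re (trace (?A ** S))"
      unfolding assms(8) T_def by (rule key_ineq[OF U a0 that True])
    then show ?thesis using True by (simp add: Lag_def L_def C_def)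
  next
    case False then show ?thesis by (simp add: Lag_def)
  qed
  have lim: "((\<lambda>t. Lag h K Gam P lam mu (St t)) \<longlongrightarrow> ereal L) at_top"
  proof -
    have "((\<lambda>t. L + c / t) \<longlongrightarrow> L + 0) at_top"
      by (intro tendsto_add tendsto_const tendsto_divide_0[OF tendsto_const]
          filterlim_at_top_imp_at_infinity filterlim_ident)
    then have "((\<lambda>t. ereal (L + c / t)) \<longlongrightarrow> ereal L) at_top" by simp
    moreover have "eventually (\<lambda>t. ereal (L + c / t) = Lag h K Gam P lam mu (St t)) at_top"
      using eventually_gt_at_top[of "0::real"] by eventually_elim (simp add: LagSt)
    ultimately show ?thesis by (rule Lim_transform_eventually)
  qed
  have INFeq: "(INF S\<in>{S. psd S}. Lag h K Gam P lam mu S) = ereal L"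
  proof (rule antisym)
    have "eventually (\<lambda>t. (INF S\<in>{S. psd S}. Lag h K Gam P lam mu S) \<le> Lag h K Gam P lam mu (St t)) at_top"
      using eventually_gt_at_top[of "0::real"]
      by eventually_elim (rule INF_lower, simp add: psdSt)
    then show "(INF S\<in>{S. psd S}. Lag h K Gam P lam mu S) \<le> ereal L"
      by (rule tendsto_le[OF trivial_limit_at_top_linorder lim tendsto_const])
    show "ereal L \<le> (INF S\<in>{S. psd S}. Lag h K Gam P lam mu S)"
      by (rule INF_greatest) (use lower in auto)
  qed
  have StEq: "St = (\<lambda>t. U ** diagm (\<lambda>i. if pos i < N then alpha i powr (-1/2) else t) ** adj U)"
    by (simp add: St_def tauEq fun_eq_iff)
  show ?thesis
  proof
    show "N = card (UNIV :: 'n set) \<longrightarrow>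
            (let S0 = U ** diagm (\<lambda>i. alpha i powr (-1/2)) ** adj U in
              psd S0 \<and> (\<forall>S. psd S \<longrightarrow> Lag h K Gam P lam mu S0 \<le> Lag h K Gam P lam mu S))"
    proof
      assume N: "N = card (UNIV :: 'n set)"
      have allpos: "pos i < N" for i :: 'n using pos_lt_card[of i] N by simp
      have S0: "U ** diagm (\<lambda>i. alpha i powr (-1/2)) ** adj U = St 1"
        by (simp add: St_def tauEq allpos)
      have c0: "c = 0" using allpos by (simp add: c_def)
      have "Lag h K Gam P lam mu (St 1) = ereal L" using LagSt[of 1] c0 by simp
      then show "let S0 = U ** diagm (\<lambda>i. alpha i powr (-1/2)) ** adj U in
              psd S0 \<and> (\<forall>S. psd S \<longrightarrow> Lag h K Gam P lam mu S0 \<le> Lag h K Gam P lam mu S)"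
        unfolding Let_def S0 using psdSt[of 1] lower by simp
    qed
    show "((\<lambda>t. Lag h K Gam P lam mu
               (U ** diagm (\<lambda>i. if pos i < N then alpha i powr (-1/2) else t) ** adj U))
            \<longlongrightarrow> (INF S\<in>{S. psd S}. Lag h K Gam P lam mu S)) at_top"
      using lim unfolding INFeq StEq .
  qed
qed

end
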